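(* Let $(X,d)$ be a compact metric space and $f_{0,\infty}=\{f_n\}_{n=0}^\infty$ an equi-continuous sequence of continuous self-maps of $X$. If $h(f_{0,\infty})>0$, then $h^{*}(f_{0,\infty})=+\infty$.
   Context: $f_{0,\infty}$ is equi-continuous if for every $\epsilon>0$ there is $\delta>0$ with $d(x,y)<\delta\Rightarrow d(f_n x,f_n y)<\epsilon$ for all $n\ge0$. $f_0^n=f_{n-1}\circ\cdots\circ f_0$, $f_0^0=\mathrm{id}$. $\mathcal S$ is the set of strictly increasing sequences $A=\{a_i\}_{i\ge1}$ of nonnegative integers and $h_A(f_{0,\infty})=\sup_{\mathscr A}\limsup_{n\to\infty}\frac1n\log\mathcal N(\bigvee_{i=1}^n (f_0^{a_i})^{-1}\mathscr A)$ over finite open covers $\mathscr A$, with $\bigvee$ the common refinement and $\mathcal N$ the minimal cardinality of a subcover. The topological entropy is $h(f_{0,\infty})=h_A(f_{0,\infty})$ for $A=\{0,1,2,\dots\}$, and the supremum topological sequence entropy is $h^*(f_{0,\infty})=\sup_{A\in\mathcal S}h_A(f_{0,\infty})$. *)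

theory Defs
  imports "HOL-Analysis.Analysis" "HOL-Library.Liminf_Limsup"
begin

primrec nacomp :: "(nat \<Rightarrow> 'a \<Rightarrow> 'a) \<Rightarrow> nat \<Rightarrow> 'a \<Rightarrow> 'a" where
  "nacomp f 0 = id"
| "nacomp f (Suc n) = f n \<circ> nacomp f n"

definition equicont_seq :: "'a::metric_space set \<Rightarrow> (nat \<Rightarrow> 'a \<Rightarrow> 'a) \<Rightarrow> bool" where
  "equicont_seq X f \<longleftrightarrow> (\<forall>\<epsilon>>0. \<exists>\<delta>>0. \<forall>x\<in>X. \<forall>y\<in>X.
      dist x y < \<delta> \<longrightarrow> (\<forall>n. dist (f n x) (f n y) < \<epsilon>))"

definition open_covers :: "'a::topological_space set \<Rightarrow> 'a set set set" where
  "open_covers X = {\<A>. finite \<A> \<and> (\<forall>U\<in>\<A>. openin (top_of_set X) U) \<and> \<Union>\<A> = X}"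

definition Ncov :: "'a set \<Rightarrow> 'a set set \<Rightarrow> nat" where
  "Ncov X \<A> = (LEAST k. \<exists>\<B>\<subseteq>\<A>. finite \<B> \<and> card \<B> = k \<and> \<Union>\<B> = X)"

text \<open>Common refinement of the covers (f_0^{a_i})^{-1} A, i = 1..n
  (indices shifted: a 0, ..., a (n-1)).\<close>
definition join_pre :: "'a set \<Rightarrow> (nat \<Rightarrow> 'a \<Rightarrow> 'a) \<Rightarrow> (nat \<Rightarrow> nat) \<Rightarrow> 'a set set \<Rightarrow> nat \<Rightarrow> 'a set set" where
  "join_pre X f a \<A> n =
     {X \<inter> (\<Inter>i<n. nacomp f (a i) -` U i) | U. \<forall>i<n. U i \<in> \<A>}"

definition seq_entropy :: "'a::topological_space set \<Rightarrow> (nat \<Rightarrow> 'a \<Rightarrow> 'a) \<Rightarrow> (nat \<Rightarrow> nat) \<Rightarrow> ereal" where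
  "seq_entropy X f a = (SUP \<A>\<in>open_covers X.
      limsup (\<lambda>n. ereal (ln (real (Ncov X (join_pre X f a \<A> n))) / real n)))"

definition top_entropy :: "'a::topological_space set \<Rightarrow> (nat \<Rightarrow> 'a \<Rightarrow> 'a) \<Rightarrow> ereal" where
  "top_entropy X f = seq_entropy X f id"

definition sup_seq_entropy :: "'a::topological_space set \<Rightarrow> (nat \<Rightarrow> 'a \<Rightarrow> 'a) \<Rightarrow> ereal" where
  "sup_seq_entropy X f = (SUP a\<in>{a. strict_mono a}. seq_entropy X f a)"

end

theory Submission
  imports Defs
begin

lemma nacomp_shift: "nacomp f (s + r) = nacomp (\<lambda>j. f (j + s)) r \<circ> nacomp f s"
  by (induction r) (auto simp: add.commute)

lemma nacomp_in:
  assumes "\<And>n. f n ` X \<subseteq> X" "x \<in> X" shows "nacomp f r x \<in> X"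
  using assms by (induction r) auto

lemma equicont_comp:
  assumes eq: "equicont_seq X f" and inv: "\<And>n. f n ` X \<subseteq> X"
  shows "\<forall>\<epsilon>>0. \<exists>\<eta>>0. \<forall>s r' x y. r' \<le> r \<longrightarrow> x \<in> X \<longrightarrow> y \<in> X \<longrightarrow> dist x y < \<eta> \<longrightarrow>
     dist (nacomp (\<lambda>j. f (j + s)) r' x) (nacomp (\<lambda>j. f (j + s)) r' y) < \<epsilon>"
proof (induction r)
  case 0
  then show ?case by auto
next
  case (Suc r)
  show ?case
  proof (intro allI impI)
    fix \<epsilon> :: real assume "\<epsilon> > 0"
    then obtain d where d: "d > 0" "\<forall>x\<in>X. \<forall>y\<in>X. dist x y < d \<longrightarrow> (\<forall>n. dist (f n x) (f n y) < \<epsilon>)"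
      using eq unfolding equicont_seq_def by blast
    then obtain \<eta> where \<eta>: "\<eta> > 0" "\<forall>s r' x y. r' \<le> r \<longrightarrow> x \<in> X \<longrightarrow> y \<in> X \<longrightarrow> dist x y < \<eta> \<longrightarrow>
     dist (nacomp (\<lambda>j. f (j + s)) r' x) (nacomp (\<lambda>j. f (j + s)) r' y) < min \<epsilon> d"
      using Suc.IH \<open>\<epsilon> > 0\<close> by (metis min_less_iff_conj)
    have inv': "\<And>n. (\<lambda>j. f (j + s)) n ` X \<subseteq> X" for s using inv by blast
    show "\<exists>\<eta>>0. \<forall>s r' x y. r' \<le> Suc r \<longrightarrow> x \<in> X \<longrightarrow> y \<in> X \<longrightarrow> dist x y < \<eta> \<longrightarrow>
     dist (nacomp (\<lambda>j. f (j + s)) r' x) (nacomp (\<lambda>j. f (j + s)) r' y) < \<epsilon>"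
    proof (intro exI[of _ \<eta>] conjI allI impI)
      fix s r' x y assume h: "r' \<le> Suc r" "x \<in> X" "y \<in> X" "dist x y < \<eta>"
      show "dist (nacomp (\<lambda>j. f (j + s)) r' x) (nacomp (\<lambda>j. f (j + s)) r' y) < \<epsilon>"
      proof (cases "r' \<le> r")
        case True
        then show ?thesis using \<eta>(2) h by fastforce
      next
        case False
        then have r': "r' = Suc r" using h by simp
        have "dist (nacomp (\<lambda>j. f (j + s)) r x) (nacomp (\<lambda>j. f (j + s)) r y) < d"
          using \<eta>(2) h by fastforce
        moreover have "nacomp (\<lambda>j. f (j + s)) r x \<in> X" "nacomp (\<lambda>j. f (j + s)) r y \<in> X"
          using nacomp_in[OF inv'] h by auto
        ultimately show ?thesis using d(2) r' by simp
      qed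
    qed (use \<eta> in auto)
  qed
qed

lemma Ncov_le:
  assumes "S \<subseteq> D" "finite S" "\<Union>S = X" shows "Ncov X D \<le> card S"
  unfolding Ncov_def using assms by (intro Least_le) blast

lemma Ncov_ex:
  assumes "S \<subseteq> D" "finite S" "\<Union>S = X"
  obtains T where "T \<subseteq> D" "finite T" "\<Union>T = X" "card T = Ncov X D"
proof -
  have "\<exists>k. \<exists>\<B>\<subseteq>D. finite \<B> \<and> card \<B> = k \<and> \<Union>\<B> = X" using assms by blast
  from LeastI_ex[OF this] show ?thesis using that unfolding Ncov_def by blast
qed

lemma join_pre_finite:
  assumes "finite B" shows "finite (join_pre X f a B n)"
proof -
  have "join_pre X f a B n \<subseteq> (\<lambda>U. X \<inter> (\<Inter>i<n. nacomp f (a i) -` U i)) ` (PiE {..<n} (\<lambda>_. B))"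
  proof
    fix V assume "V \<in> join_pre X f a B n"
    then obtain U where U: "\<forall>i<n. U i \<in> B" "V = X \<inter> (\<Inter>i<n. nacomp f (a i) -` U i)"
      unfolding join_pre_def by blast
    have "restrict U {..<n} \<in> PiE {..<n} (\<lambda>_. B)" using U by auto
    moreover have "V = X \<inter> (\<Inter>i<n. nacomp f (a i) -` restrict U {..<n} i)" using U by auto
    ultimately show "V \<in> (\<lambda>U. X \<inter> (\<Inter>i<n. nacomp f (a i) -` U i)) ` (PiE {..<n} (\<lambda>_. B))"
      by blast
  qed
  moreover have "finite (PiE {..<n} (\<lambda>_. B))" using assms by (simp add: finite_PiE)
  ultimately show ?thesis by (meson finite_imageI finite_subset)
qed

lemma join_pre_cover:
  assumes "\<Union>B = X" "\<And>n. f n ` X \<subseteq> X"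
  shows "\<Union>(join_pre X f a B n) = X"
proof
  show "\<Union>(join_pre X f a B n) \<subseteq> X" unfolding join_pre_def by auto
  show "X \<subseteq> \<Union>(join_pre X f a B n)"
  proof
    fix x assume x: "x \<in> X"
    define U where "U i = (SOME V. V \<in> B \<and> nacomp f (a i) x \<in> V)" for i
    have "U i \<in> B \<and> nacomp f (a i) x \<in> U i" for i
    proof -
      have "nacomp f (a i) x \<in> \<Union>B" using assms(1) nacomp_in[OF assms(2) x] by simp
      then have "\<exists>V. V \<in> B \<and> nacomp f (a i) x \<in> V" by (simp only: Union_iff Bex_def)
      then show ?thesis unfolding U_def by (rule someI_ex)
    qed
    then have "x \<in> X \<inter> (\<Inter>i<n. nacomp f (a i) -` U i)" "X \<inter> (\<Inter>i<n. nacomp f (a i) -` U i) \<in> join_pre X f a B n"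
      using x unfolding join_pre_def by auto
    then show "x \<in> \<Union>(join_pre X f a B n)" by blast
  qed
qed



lemma key:
  fixes X :: "'a::metric_space set"
  assumes inv: "\<And>n. f n ` X \<subseteq> X" and XB: "\<Union>B = X" and fB: "finite B"
   and leb: "\<And>x. x\<in>X \<Longrightarrow> \<exists>U\<in>A. ball x \<delta> \<inter> X \<subseteq> U"
   and diam: "\<And>V y z. V\<in>B \<Longrightarrow> y\<in>V \<Longrightarrow> z\<in>V \<Longrightarrow> dist y z < \<eta>"
   and eqc: "\<And>s r x y. r < k \<Longrightarrow> x\<in>X \<Longrightarrow> y\<in>X \<Longrightarrow> dist x y < \<eta> \<Longrightarrow>
        dist (nacomp (\<lambda>j. f (j+s)) r x) (nacomp (\<lambda>j. f (j+s)) r y) < \<delta>"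
   and mk: "m \<le> k*n" and Xne: "X \<noteq> {}"
  shows "Ncov X (join_pre X f id A m) \<le> Ncov X (join_pre X f (\<lambda>i. k*i) B n)"
proof -
  let ?C = "join_pre X f (\<lambda>i. k*i) B n"
  let ?D = "join_pre X f id A m"
  obtain S where S: "S \<subseteq> ?C" "finite S" "\<Union>S = X" "card S = Ncov X ?C"
    using Ncov_ex[of ?C ?C X, OF order_refl join_pre_finite[OF fB] join_pre_cover[OF XB inv]] by metis
  have W: "\<exists>W\<in>?D. V \<subseteq> W" if V: "V \<in> ?C" for V
  proof -
    obtain U where U: "\<forall>i<n. U i \<in> B" "V = X \<inter> (\<Inter>i<n. nacomp f (k*i) -` U i)"
      using V unfolding join_pre_def by blast
    define x0 where "x0 = (if V \<noteq> {} then SOME x. x \<in> V else SOME x. x \<in> X)"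
    have x0V: "x0 \<in> V" if "V \<noteq> {}"
      using that unfolding x0_def by (simp add: some_in_eq)
    have x0X: "x0 \<in> X"
    proof (cases "V = {}")
      case True then show ?thesis unfolding x0_def using Xne by (simp add: some_in_eq)
    next
      case False then show ?thesis using x0V U by blast
    qed
    define U' where "U' j = (SOME U. U \<in> A \<and> ball (nacomp f j x0) \<delta> \<inter> X \<subseteq> U)" for j
    have U': "U' j \<in> A \<and> ball (nacomp f j x0) \<delta> \<inter> X \<subseteq> U' j" for j
    proof -
      have "\<exists>U. U \<in> A \<and> ball (nacomp f j x0) \<delta> \<inter> X \<subseteq> U"
        using leb[OF nacomp_in[OF inv x0X]] by (simp only: Bex_def)
      then show ?thesis unfolding U'_def by (rule someI_ex)
    qed
    let ?W = "X \<inter> (\<Inter>j<m. nacomp f (id j) -` U' j)"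
    have "?W \<in> ?D" unfolding join_pre_def using U' by blast
    moreover have "V \<subseteq> ?W"
    proof
      fix y assume y: "y \<in> V"
      have yX: "y \<in> X" using y U by auto
      have "nacomp f j y \<in> U' j" if j: "j < m" for j
      proof -
        define i where "i = j div k"
        define r where "r = j mod k"
        have k0: "k > 0" using j mk by (cases k) auto
        have jj: "j = k*i + r" by (simp add: i_def r_def)
        have rk: "r < k" using k0 by (simp add: r_def)
        have "k*i < k*n" using jj j mk by linarith
        then have ik: "i < n" by simp
        have "nacomp f (k*i) y \<in> U i" "nacomp f (k*i) x0 \<in> U i"
          using U y x0V ik by auto
        then have "dist (nacomp f (k*i) x0) (nacomp f (k*i) y) < \<eta>" using diam U ik by blast
        then have "dist (nacomp (\<lambda>j. f (j + k*i)) r (nacomp f (k*i) x0))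
               (nacomp (\<lambda>j. f (j+k*i)) r (nacomp f (k*i) y)) < \<delta>"
          by (rule eqc[OF rk nacomp_in[OF inv x0X] nacomp_in[OF inv yX]])
        then have "dist (nacomp f j x0) (nacomp f j y) < \<delta>"
          using nacomp_shift[of f "k*i" r] jj by simp
        then have "nacomp f j y \<in> ball (nacomp f j x0) \<delta> \<inter> X"
          using nacomp_in[OF inv yX] by (simp add: mem_ball)
        then show ?thesis using U'[of j] by blast
      qed
      then show "y \<in> ?W" using yX by auto
    qed
    ultimately show ?thesis by blast
  qed
  then have "\<forall>V\<in>?C. \<exists>W. W \<in> ?D \<and> V \<subseteq> W" by blast
  then have "\<exists>W. \<forall>V\<in>?C. W V \<in> ?D \<and> V \<subseteq> W V" by (rule bchoice)
  then obtain W where Wp0: "\<forall>V\<in>?C. W V \<in> ?D \<and> V \<subseteq> W V" by (elim exE)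
  then have Wp: "\<And>V. V\<in>?C \<Longrightarrow> W V \<in> ?D \<and> V \<subseteq> W V" by blast
  have sub: "W ` S \<subseteq> ?D" using Wp S(1) by blast
  have "\<Union>?D \<subseteq> X" unfolding join_pre_def by auto
  then have cov: "\<Union>(W ` S) = X"
  proof (intro equalityI subsetI)
    fix x assume "x \<in> \<Union>(W ` S)"
    then obtain V where "V \<in> S" "x \<in> W V" by blast
    then show "x \<in> X" using sub \<open>\<Union>?D \<subseteq> X\<close> by blast
  next
    fix x assume "x \<in> X"
    then obtain V where V: "V \<in> S" "x \<in> V" using S(3) by blast
    then have "x \<in> W V" using Wp S(1) by blast
    then show "x \<in> \<Union>(W ` S)" using V(1) by blast
  qed
  have "Ncov X ?D \<le> card (W ` S)" using Ncov_le[OF sub _ cov] S(2) by simp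
  also have "\<dots> \<le> card S" using S(2) by (rule card_image_le)
  finally show ?thesis using S(4) by simp
qed


lemma Ncov_empty: "Ncov {} D = 0"
  using Ncov_le[of "{}" D "{}"] by simp

lemma top_entropy_empty: "top_entropy {} f = 0"
proof -
  have "limsup (\<lambda>n. ereal (ln (real (Ncov {} (join_pre {} f id \<A> n))) / real n)) = 0" for \<A>
    by (simp add: Ncov_empty Limsup_const zero_ereal_def)
  then have "top_entropy {} f = (SUP \<A>\<in>open_covers ({}::'a set). 0)"
    unfolding top_entropy_def seq_entropy_def by simp
  also have "\<dots> = 0"
  proof (rule SUP_const)
    show "open_covers ({}::'a set) \<noteq> {}" unfolding open_covers_def by blast
  qed
  finally show ?thesis .
qed

theorem proposition4p3:
  fixes X :: "'a::metric_space set" and f :: "nat \<Rightarrow> 'a \<Rightarrow> 'a"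
  assumes "compact X"
    and "\<And>n. continuous_on X (f n)"
    and "\<And>n. f n ` X \<subseteq> X"
    and "equicont_seq X f"
    and "top_entropy X f > 0"
  shows "sup_seq_entropy X f = \<infinity>"
proof -
  note inv = assms(3)
  have Xne: "X \<noteq> {}"
  proof
    assume "X = {}"
    then show False using assms(5) top_entropy_empty[of f] by simp
  qed
  obtain A where A: "A \<in> open_covers X"
    and Apos: "0 < limsup (\<lambda>n. ereal (ln (real (Ncov X (join_pre X f id A n))) / real n))"
    using assms(5) unfolding top_entropy_def seq_entropy_def by (auto simp: less_SUP_iff)
  define g where "g n = ln (real (Ncov X (join_pre X f id A n))) / real n" for n
  obtain c where c: "0 < ereal c" "ereal c < limsup (\<lambda>n. ereal (g n))"
    using ereal_dense2[OF Apos[folded g_def]] by blast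
  have c0: "c > 0" using c(1) by simp
  have freq: "\<exists>m\<ge>N. c < g m" for N
  proof -
    have "ereal c < (SUP m\<in>{N..}. ereal (g m))"
      using less_INF_D[OF c(2)[unfolded limsup_INF_SUP] UNIV_I, of N] by simp
    then show ?thesis by (auto simp: less_SUP_iff)
  qed
  have Aprops: "finite A" "\<And>U. U \<in> A \<Longrightarrow> openin (top_of_set X) U" "\<Union>A = X"
    using A unfolding open_covers_def by auto
  define G where "G = {T. open T \<and> X \<inter> T \<in> A}"
  have "X \<subseteq> \<Union>G"
  proof
    fix x assume "x \<in> X"
    then obtain U where U: "U \<in> A" "x \<in> U" using Aprops(3) by blast
    then obtain T where "open T" "U = X \<inter> T" using Aprops(2) openin_open by metis
    then show "x \<in> \<Union>G" using U unfolding G_def by blast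
  qed
  then obtain \<delta> where \<delta>: "0 < \<delta>" "\<And>x. x \<in> X \<Longrightarrow> \<exists>T \<in> G. ball x \<delta> \<subseteq> T"
    using Heine_Borel_lemma[OF assms(1)] unfolding G_def by blast
  have leb: "\<exists>U\<in>A. ball x \<delta> \<inter> X \<subseteq> U" if xX: "x \<in> X" for x
  proof -
    obtain T where "T \<in> G" "ball x \<delta> \<subseteq> T" using \<delta>(2)[OF xX] by blast
    then show ?thesis unfolding G_def by blast
  qed
  have "sup_seq_entropy X f \<ge> ereal M" for M
  proof -
    define k where "k = nat (ceiling (2 * \<bar>M\<bar> / c)) + 1"
    have k1: "k \<ge> 1" unfolding k_def by simp
    have "real k \<ge> 2 * \<bar>M\<bar> / c" unfolding k_def by linarith
    then have "c * real k \<ge> 2 * \<bar>M\<bar>" using c0 by (simp add: field_simps)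
    then have Mk: "M \<le> c * real k / 2" by linarith
    obtain \<eta> where \<eta>: "\<eta> > 0" "\<forall>s r' x y. r' \<le> k \<longrightarrow> x \<in> X \<longrightarrow> y \<in> X \<longrightarrow> dist x y < \<eta> \<longrightarrow>
     dist (nacomp (\<lambda>j. f (j + s)) r' x) (nacomp (\<lambda>j. f (j + s)) r' y) < \<delta>"
      using equicont_comp[OF assms(4) inv, of k] \<delta>(1) by blast
    have eqc: "dist (nacomp (\<lambda>j. f (j+s)) r x) (nacomp (\<lambda>j. f (j+s)) r y) < \<delta>"
      if "r < k" "x\<in>X" "y\<in>X" "dist x y < \<eta>" for s r x y
      using \<eta>(2) that by simp
    obtain C' where C': "C' \<subseteq> X" "finite C'" "X \<subseteq> (\<Union>c\<in>C'. ball c (\<eta>/2))"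
    proof (rule compactE_image[OF assms(1), of X "\<lambda>x. ball x (\<eta>/2)"])
      show "X \<subseteq> (\<Union>c\<in>X. ball c (\<eta>/2))" using \<eta>(1) by force
    qed auto
    define B where "B = (\<lambda>x. X \<inter> ball x (\<eta>/2)) ` C'"
    have fB: "finite B" unfolding B_def using C'(2) by simp
    have XB: "\<Union>B = X" unfolding B_def using C'(3) by blast
    have B: "B \<in> open_covers X" unfolding open_covers_def
      using fB XB by (auto simp: B_def intro: openin_open_Int)
    have diam: "dist y z < \<eta>" if Vyz: "V\<in>B" "y\<in>V" "z\<in>V" for V y z
    proof -
      obtain x where "y \<in> ball x (\<eta>/2)" "z \<in> ball x (\<eta>/2)" using Vyz unfolding B_def by blast
      then have "dist x y < \<eta>/2" "dist x z < \<eta>/2" by (simp_all add: mem_ball)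
      moreover have "dist y z \<le> dist x y + dist x z" by (rule dist_triangle3)
      ultimately show ?thesis by linarith
    qed
    define a where "a = (\<lambda>i::nat. k*i)"
    have sa: "strict_mono a" unfolding a_def using k1 by (intro strict_monoI) simp
    define b where "b n = ln (real (Ncov X (join_pre X f a B n))) / real n" for n
    have freqb: "\<exists>n\<ge>N. c * real k / 2 \<le> b n" for N
    proof -
      obtain m where m: "m \<ge> N*k + k" "c < g m" using freq[of "N*k+k"] by blast
      define n where "n = (m + k - 1) div k"
      have mpos: "m > 0" using m(1) k1 by simp
      have mk: "m \<le> k*n"
      proof -
        have "(m + k - 1) = k * n + (m + k - 1) mod k" unfolding n_def by simp
        moreover have "(m + k - 1) mod k < k" using k1 by simp
        ultimately show ?thesis using k1 by linarith
      qed
      have nN: "n \<ge> N"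
      proof -
        have "N*k \<le> m + k - 1" using m(1) k1 by simp
        then have "N*k div k \<le> (m + k - 1) div k" by (rule div_le_mono)
        then show ?thesis using k1 unfolding n_def by simp
      qed
      have nk2: "k*n < 2*m"
      proof -
        have "k*n \<le> m + k - 1" unfolding n_def by (simp add: mult.commute)
        then show ?thesis using m(1) k1 by linarith
      qed
      have npos: "n > 0" using mk mpos by (cases n) auto
      have Nle: "Ncov X (join_pre X f id A m) \<le> Ncov X (join_pre X f a B n)"
        unfolding a_def
        by (rule key[OF inv XB fB leb diam eqc mk Xne]) auto
      have gm: "c * real m < ln (real (Ncov X (join_pre X f id A m)))"
        using m(2) mpos unfolding g_def by (simp add: field_simps)
      then have "Ncov X (join_pre X f id A m) > 0" using c0 mpos
        by (cases "Ncov X (join_pre X f id A m) = 0") (auto, metis mult_pos_pos of_nat_0_less_iff not_less_iff_gr_or_eq)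
      then have "ln (real (Ncov X (join_pre X f id A m))) \<le> ln (real (Ncov X (join_pre X f a B n)))"
        using Nle by simp
      with gm have "c * real m < ln (real (Ncov X (join_pre X f a B n)))" by linarith
      moreover have "c * real k * real n \<le> 2 * (c * real m)"
      proof -
        have "real k * real n \<le> 2 * real m" using nk2 by (metis of_nat_mult of_nat_le_iff less_imp_le of_nat_numeral)
        then show ?thesis using c0 by (metis mult.assoc mult.left_commute mult_left_mono less_imp_le)
      qed
      moreover have "c * real k / 2 * real n = (c * real k * real n) / 2" by simp
      ultimately have "c * real k / 2 * real n \<le> ln (real (Ncov X (join_pre X f a B n)))" by linarith
      then have "c * real k / 2 \<le> b n" unfolding b_def using npos by (simp add: field_simps)
      then show ?thesis using nN by blast
    qed
    have "ereal (c * real k / 2) \<le> limsup (\<lambda>n. ereal (b n))"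
    proof (rule Limsup_greatest)
      fix P assume "eventually P sequentially"
      then obtain N where N: "\<And>n. n \<ge> N \<Longrightarrow> P n" by (auto simp: eventually_sequentially)
      obtain n where "n \<ge> N" "c * real k / 2 \<le> b n" using freqb by blast
      then show "ereal (c * real k / 2) \<le> (SUP x\<in>Collect P. ereal (b x))"
        using N by (intro SUP_upper2[of n]) auto
    qed
    also have "\<dots> \<le> seq_entropy X f a"
      unfolding seq_entropy_def b_def using B by (intro SUP_upper2[of B]) auto
    also have "\<dots> \<le> sup_seq_entropy X f"
      unfolding sup_seq_entropy_def using sa by (intro SUP_upper) auto
    finally show ?thesis using Mk by (meson ereal_less_eq(3) order_trans)
  qed
  then show ?thesis by (rule ereal_top)
qed

end
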